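(* Let $W\in[0,1]^{k\times k}$ be a symmetric positive semidefinite matrix with unit diagonal, let $\mu>0$, and consider the collaborative learning problem with strategy space $\mathbb{R}_+^k$, utilities $u_i({\boldsymbol\theta})=W_i^\top{\boldsymbol\theta}$ ($W_i$ the $i$-th column of $W$) and thresholds $\mu_i=\mu$. If ${\boldsymbol\theta}^{\mathrm{eq}}$ is an optimal stable equilibrium with ${\boldsymbol\theta}^{\mathrm{eq}}>\mathbf{0}$ (all entries positive), then ${\boldsymbol\theta}^{\mathrm{eq}}$ is socially optimal.
   Context: ${\boldsymbol\theta}$ is feasible if $u_i({\boldsymbol\theta})\ge\mu$ for all $i$. A feasible ${\boldsymbol\theta}\in\mathbb{R}_+^k$ is a stable equilibrium if for no $i$ is there $0\le\theta_i'<\theta_i$ with $u_i(\theta_i',{\boldsymbol\theta}_{-i})\ge\mu$. An optimal stable equilibrium minimizes $\mathbf{1}^\top{\boldsymbol\theta}$ among stable equilibria. A socially optimal solution minimizes $\mathbf{1}^\top{\boldsymbol\theta}$ over all feasible ${\boldsymbol\theta}\ge\mathbf{0}$. *)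

theory Defs
  imports "HOL-Analysis.Analysis"
begin

text \<open>Collaborative learning with strategy space the nonnegative orthant of R^k,
  agents indexed by the finite type 'n (k = CARD('n)), utilities u i theta
  and a common threshold mu.\<close>

definition nonneg_vec :: "real^'n \<Rightarrow> bool" where
  "nonneg_vec \<theta> \<longleftrightarrow> (\<forall>i. \<theta> $ i \<ge> 0)"

definition feasible :: "('n \<Rightarrow> real^'n \<Rightarrow> real) \<Rightarrow> real \<Rightarrow> real^'n \<Rightarrow> bool" where
  "feasible u \<mu> \<theta> \<longleftrightarrow> (\<forall>i. u i \<theta> \<ge> \<mu>)"

definition stable_equilibrium :: "('n \<Rightarrow> real^'n \<Rightarrow> real) \<Rightarrow> real \<Rightarrow> real^'n \<Rightarrow> bool" where
  "stable_equilibrium u \<mu> \<theta> \<longleftrightarrow> nonneg_vec \<theta> \<and> feasible u \<mu> \<theta> \<and>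
     (\<forall>i. \<not> (\<exists>t. 0 \<le> t \<and> t < \<theta> $ i \<and> u i (\<chi> j. if j = i then t else \<theta> $ j) \<ge> \<mu>))"

definition optimal_stable_equilibrium :: "('n \<Rightarrow> real^'n \<Rightarrow> real) \<Rightarrow> real \<Rightarrow> real^'n \<Rightarrow> bool" where
  "optimal_stable_equilibrium u \<mu> \<theta> \<longleftrightarrow> stable_equilibrium u \<mu> \<theta> \<and>
     (\<forall>\<theta>'. stable_equilibrium u \<mu> \<theta>' \<longrightarrow> (\<Sum>j\<in>UNIV. \<theta> $ j) \<le> (\<Sum>j\<in>UNIV. \<theta>' $ j))"

definition socially_optimal :: "('n \<Rightarrow> real^'n \<Rightarrow> real) \<Rightarrow> real \<Rightarrow> real^'n \<Rightarrow> bool" where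
  "socially_optimal u \<mu> \<theta> \<longleftrightarrow> nonneg_vec \<theta> \<and> feasible u \<mu> \<theta> \<and>
     (\<forall>\<theta>'. nonneg_vec \<theta>' \<and> feasible u \<mu> \<theta>' \<longrightarrow> (\<Sum>j\<in>UNIV. \<theta> $ j) \<le> (\<Sum>j\<in>UNIV. \<theta>' $ j))"

definition lin_util :: "real^'n^'n \<Rightarrow> 'n \<Rightarrow> real^'n \<Rightarrow> real" where
  "lin_util W i \<theta> = (\<Sum>j\<in>UNIV. W $ j $ i * \<theta> $ j)"

end

theory Submission
  imports Defs
begin

theorem corollary1:
  fixes W :: "real^'n^'n" and \<mu> :: real and \<theta>eq :: "real^'n"
  assumes entries: "\<And>i j. 0 \<le> W $ i $ j \<and> W $ i $ j \<le> 1"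
    and symm: "transpose W = W"
    and psd: "\<And>x. 0 \<le> x \<bullet> (W *v x)"
    and diag: "\<And>i. W $ i $ i = 1"
    and mu_pos: "\<mu> > 0"
    and opt: "optimal_stable_equilibrium (lin_util W) \<mu> \<theta>eq"
    and pos: "\<And>i. \<theta>eq $ i > 0"
  shows "socially_optimal (lin_util W) \<mu> \<theta>eq"
proof -
  have st: "stable_equilibrium (lin_util W) \<mu> \<theta>eq"
    using opt unfolding optimal_stable_equilibrium_def by blast
  have sym: "\<And>a b. W $ a $ b = W $ b $ a"
  proof -
    fix a b
    have "(transpose W) $ a $ b = W $ b $ a" by (simp add: transpose_def)
    then show "W $ a $ b = W $ b $ a" using symm by simp
  qed
  have eq: "lin_util W i \<theta>eq = \<mu>" for i
  proof (rule ccontr)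
    assume ne: "lin_util W i \<theta>eq \<noteq> \<mu>"
    have ge: "lin_util W i \<theta>eq \<ge> \<mu>" using st unfolding stable_equilibrium_def feasible_def by blast
    define d where "d = lin_util W i \<theta>eq - \<mu>"
    have dpos: "d > 0" using ne ge d_def by simp
    define t where "t = max 0 (\<theta>eq $ i - d)"
    have t0: "0 \<le> t" and tlt: "t < \<theta>eq $ i" and tle: "\<theta>eq $ i - t \<le> d"
      using pos[of i] dpos by (auto simp: t_def)
    have "lin_util W i (\<chi> j. if j = i then t else \<theta>eq $ j) - lin_util W i \<theta>eq
        = (\<Sum>j\<in>UNIV. W $ j $ i * ((if j = i then t else \<theta>eq $ j) - \<theta>eq $ j))"
      by (simp add: lin_util_def sum_subtractf[symmetric] algebra_simps)
    also have "\<dots> = (\<Sum>j\<in>UNIV. if j = i then W $ i $ i * (t - \<theta>eq $ i) else 0)"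
      by (rule sum.cong) auto
    also have "\<dots> = t - \<theta>eq $ i" by (simp add: diag)
    finally have "lin_util W i (\<chi> j. if j = i then t else \<theta>eq $ j) \<ge> \<mu>"
      using tle d_def by simp
    then show False using st t0 tlt unfolding stable_equilibrium_def by blast
  qed
  have main: "(\<Sum>j\<in>UNIV. \<theta>eq $ j) \<le> (\<Sum>j\<in>UNIV. \<theta>' $ j)"
    if nn: "nonneg_vec \<theta>'" and fe: "feasible (lin_util W) \<mu> \<theta>'" for \<theta>'
  proof -
    have "\<mu> * (\<Sum>j\<in>UNIV. \<theta>' $ j) = (\<Sum>j\<in>UNIV. \<theta>' $ j * (\<Sum>k\<in>UNIV. W $ k $ j * \<theta>eq $ k))"
      using eq by (simp add: lin_util_def sum_distrib_left mult.commute)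
    also have "\<dots> = (\<Sum>j\<in>UNIV. \<Sum>k\<in>UNIV. \<theta>eq $ k * (W $ j $ k * \<theta>' $ j))"
      by (simp add: sum_distrib_left sym algebra_simps)
    also have "\<dots> = (\<Sum>k\<in>UNIV. \<theta>eq $ k * lin_util W k \<theta>')"
      by (subst sum.swap) (simp add: lin_util_def sum_distrib_left)
    also have "\<dots> \<ge> (\<Sum>k\<in>UNIV. \<theta>eq $ k * \<mu>)"
      using fe pos by (intro sum_mono mult_left_mono) (auto simp: feasible_def less_imp_le)
    finally have "\<mu> * (\<Sum>j\<in>UNIV. \<theta>eq $ j) \<le> \<mu> * (\<Sum>j\<in>UNIV. \<theta>' $ j)"
      by (simp add: sum_distrib_left mult.commute)
    then show ?thesis using mu_pos by simp
  qed
  show ?thesis unfolding socially_optimal_def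
    using st main unfolding stable_equilibrium_def by blast
qed

end
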